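(* Let $r\in\mathbb R\setminus\{0\}$, let $\varphi_0,\varphi_1,\varphi$ be positive non-degenerate quasi-concave functions on $(0,\infty)$, let $\{\widetilde t_i\}$ be a discretizing sequence for $\varphi(\varphi_0,\varphi_1)$, $\{\tau_k\}$ a discretizing sequence for $\varphi_0$ and $\{z_k\}$ a discretizing sequence for $\varphi_1$. Then there is a constant $C$ independent of $k$ such that for all $k\in\mathbb Z$ $$\sum_{i:\ \tau_k\le\widetilde t_i\le\tau_{k+1}}\Big(\frac{\varphi_1(\widetilde t_i)}{\varphi_0(\widetilde t_i)}\Big)^r\le C\sup_{i:\ \tau_k\le\widetilde t_i\le\tau_{k+1}}\Big(\frac{\varphi_1(\widetilde t_i)}{\varphi_0(\widetilde t_i)}\Big)^r,$$ $$\sum_{i:\ z_k\le\widetilde t_i\le z_{k+1}}\Big(\frac{\varphi_1(\widetilde t_i)}{\varphi_0(\widetilde t_i)}\Big)^r\le C\sup_{i:\ z_k\le\widetilde t_i\le z_{k+1}}\Big(\frac{\varphi_1(\widetilde t_i)}{\varphi_0(\widetilde t_i)}\Big)^r.$$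
   Context: A function $\psi:(0,\infty)\to(0,\infty)$ is non-degenerate quasi-concave if it is non-decreasing, $\psi(t)/t$ is non-increasing, and $\lim_{t\to0+}\psi(t)=\lim_{t\to\infty}\psi(t)/t=\lim_{t\to0+}t/\psi(t)=\lim_{t\to\infty}1/\psi(t)=0$. $\varphi(\varphi_0,\varphi_1)(t)=\varphi_0(t)\varphi(\varphi_1(t)/\varphi_0(t))$. A positive sequence is strongly increasing if $\inf_k a_{k+1}/a_k\ge2$, strongly decreasing if $\sup_k a_{k+1}/a_k\le1/2$. A strongly increasing $\{s_k\}_{k\in\mathbb Z}$ is a discretizing sequence for $\psi$ if $\{\psi(s_k)\}$ is strongly increasing, $\{\psi(s_k)/s_k\}$ is strongly decreasing, and $\mathbb Z=\mathbb Z_1\sqcup\mathbb Z_2$ with $\psi(s_{k+1})\le2\psi(s_k)$ for $k\in\mathbb Z_1$ and $\psi(s_k)/s_k\le2\psi(s_{k+1})/s_{k+1}$ for $k\in\mathbb Z_2$. *)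

theory Defs
  imports Complex_Main
begin

definition nd_quasi_concave :: "(real \<Rightarrow> real) \<Rightarrow> bool" where
  "nd_quasi_concave \<psi> \<longleftrightarrow>
     (\<forall>t>0. \<psi> t > 0) \<and>
     (\<forall>s t. 0 < s \<and> s \<le> t \<longrightarrow> \<psi> s \<le> \<psi> t) \<and>
     (\<forall>s t. 0 < s \<and> s \<le> t \<longrightarrow> \<psi> t / t \<le> \<psi> s / s) \<and>
     (\<psi> \<longlongrightarrow> 0) (at_right 0) \<and>
     ((\<lambda>t. \<psi> t / t) \<longlongrightarrow> 0) at_top \<and>
     ((\<lambda>t. t / \<psi> t) \<longlongrightarrow> 0) (at_right 0) \<and>
     ((\<lambda>t. 1 / \<psi> t) \<longlongrightarrow> 0) at_top"

definition compose_qc :: "(real \<Rightarrow> real) \<Rightarrow> (real \<Rightarrow> real) \<Rightarrow> (real \<Rightarrow> real) \<Rightarrow> real \<Rightarrow> real" where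
  "compose_qc \<phi> \<phi>0 \<phi>1 t = \<phi>0 t * \<phi> (\<phi>1 t / \<phi>0 t)"

definition strongly_increasing :: "(int \<Rightarrow> real) \<Rightarrow> bool" where
  "strongly_increasing a \<longleftrightarrow> (\<forall>k. a k > 0) \<and> (\<forall>k. a (k + 1) \<ge> 2 * a k)"

definition strongly_decreasing :: "(int \<Rightarrow> real) \<Rightarrow> bool" where
  "strongly_decreasing a \<longleftrightarrow> (\<forall>k. a k > 0) \<and> (\<forall>k. a (k + 1) \<le> a k / 2)"

definition discretizing_seq :: "(real \<Rightarrow> real) \<Rightarrow> (int \<Rightarrow> real) \<Rightarrow> bool" where
  "discretizing_seq \<psi> s \<longleftrightarrow>
     strongly_increasing s \<and>
     strongly_increasing (\<lambda>k. \<psi> (s k)) \<and>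
     strongly_decreasing (\<lambda>k. \<psi> (s k) / s k) \<and>
     (\<exists>Z1 Z2. Z1 \<inter> Z2 = {} \<and> Z1 \<union> Z2 = UNIV \<and>
        (\<forall>k\<in>Z1. \<psi> (s (k + 1)) \<le> 2 * \<psi> (s k)) \<and>
        (\<forall>k\<in>Z2. \<psi> (s k) / s k \<le> 2 * (\<psi> (s (k + 1)) / s (k + 1))))"

end

theory Submission imports Defs begin

lemma nd_props:
  assumes "nd_quasi_concave p"
  shows "\<And>t. t > 0 \<Longrightarrow> p t > 0"
    and "\<And>s t. 0 < s \<Longrightarrow> s \<le> t \<Longrightarrow> p s \<le> p t"
    and "\<And>s t. 0 < s \<Longrightarrow> s \<le> t \<Longrightarrow> p t / t \<le> p s / s"
  using assms unfolding nd_quasi_concave_def by auto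

lemma qc_Q1:
  assumes "nd_quasi_concave p" "x > 0" "y > 0" "c > 1" "c * p y \<le> p x"
  shows "c * y \<le> x"
proof (rule ccontr)
  assume "\<not> c * y \<le> x"
  hence xl: "x < c * y" by simp
  have py: "p y > 0" using nd_props(1)[OF assms(1) assms(3)] .
  show False
  proof (cases "x \<le> y")
    case True
    hence "p x \<le> p y" using nd_props(2)[OF assms(1) assms(2)] by blast
    thus False using assms(4,5) py by (smt (verit) mult_less_cancel_right1)
  next
    case False
    hence "p x / x \<le> p y / y" using nd_props(3)[OF assms(1) assms(3)] by simp
    hence "p x \<le> p y * x / y" using assms(2,3) by (simp add: field_simps)
    also have "\<dots> < p y * c" using xl py assms(3) by (simp add: field_simps)
    finally show False using assms(5) by (simp add: mult.commute)
  qed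
qed

lemma qc_Q2:
  assumes "nd_quasi_concave p" "x > 0" "y > 0" "c > 1" "c * (p y / y) \<le> p x / x"
  shows "c * x \<le> y"
proof (rule ccontr)
  assume "\<not> c * x \<le> y"
  hence yl: "y < c * x" by simp
  have py: "p y / y > 0" using nd_props(1)[OF assms(1) assms(3)] assms(3) by simp
  show False
  proof (cases "y \<le> x")
    case True
    hence "p x / x \<le> p y / y" using nd_props(3)[OF assms(1) assms(3)] by blast
    thus False using assms(4,5) py by (smt (verit) mult_less_cancel_right1)
  next
    case False
    hence "p x \<le> p y" using nd_props(2)[OF assms(1) assms(2)] by simp
    hence "p x / x \<le> p y / x" using assms(2) by (simp add: divide_right_mono)
    also have "\<dots> = (p y / y) * (y / x)" using assms(2,3) by simp
    also have "\<dots> < (p y / y) * c"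
      using yl py assms(2) by (intro mult_strict_left_mono) (simp_all add: divide_less_eq)
    finally show False using assms(5) by (simp add: mult.commute)
  qed
qed

lemma si_pow:
  assumes "strongly_increasing a" "i \<le> j"
  shows "2 ^ nat (j - i) * a i \<le> a j"
proof -
  have "\<And>n. 2 ^ n * a i \<le> a (i + int n)"
  proof -
    fix n show "2 ^ n * a i \<le> a (i + int n)"
    proof (induction n)
      case 0 then show ?case by simp
    next
      case (Suc n)
      have "a (i + int n + 1) \<ge> 2 * a (i + int n)" using assms(1) unfolding strongly_increasing_def by blast
      have e: "a (i + int (Suc n)) = a (i + int n + 1)" by (simp add: algebra_simps)
      have "2 ^ Suc n * a i = 2 * (2 ^ n * a i)" by simp
      also have "\<dots> \<le> 2 * a (i + int n)" using Suc by simp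
      also have "\<dots> \<le> a (i + int n + 1)" by fact
      finally show ?case using e by simp
    qed
  qed
  from this[of "nat (j - i)"] show ?thesis using assms(2) by simp
qed

lemma sd_pow:
  assumes "strongly_decreasing a" "i \<le> j"
  shows "2 ^ nat (j - i) * a j \<le> a i"
proof -
  have "\<And>n. 2 ^ n * a (i + int n) \<le> a i"
  proof -
    fix n show "2 ^ n * a (i + int n) \<le> a i"
    proof (induction n)
      case 0 then show ?case by simp
    next
      case (Suc n)
      have h0: "a (i + int n + 1) \<le> a (i + int n) / 2" using assms(1) unfolding strongly_decreasing_def by blast
      have e: "a (i + int (Suc n)) = a (i + int n + 1)" by (simp add: algebra_simps)
      have "2 ^ Suc n * a (i + int n + 1) = 2 * a (i + int n + 1) * 2 ^ n" by simp
      also have "\<dots> \<le> a (i + int n) * 2 ^ n" using h0 by (intro mult_right_mono) auto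
      also have "\<dots> \<le> a i" using Suc by (simp add: mult.commute)
      finally show ?case using e by simp
    qed
  qed
  from this[of "nat (j - i)"] show ?thesis using assms(2) by simp
qed

lemma si_finite:
  assumes "strongly_increasing a" "B > 0"
  shows "finite {i. B \<le> a i \<and> a i \<le> A}"
proof -
  have a0: "a 0 > 0" using assms(1) unfolding strongly_increasing_def by blast
  define N where "N = nat \<lceil>\<bar>A\<bar> / a 0 + a 0 / B\<rceil>"
  have "{i. B \<le> a i \<and> a i \<le> A} \<subseteq> {- int N .. int N}"
  proof
    fix i assume "i \<in> {i. B \<le> a i \<and> a i \<le> A}"
    hence h: "B \<le> a i" "a i \<le> A" by auto
    show "i \<in> {- int N .. int N}"
    proof (cases "i \<ge> 0")
      case True
      have "2 ^ nat i * a 0 \<le> a i" using si_pow[OF assms(1), of 0 i] True by simp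
      moreover have "real (nat i) < 2 ^ nat i" by (rule of_nat_less_two_power)
      ultimately have "real (nat i) * a 0 \<le> A" using h a0
        by (meson less_imp_le mult_right_mono order_trans)
      hence "real (nat i) \<le> \<bar>A\<bar> / a 0" using a0 by (simp add: field_simps)
      moreover have "a 0 / B \<ge> 0" using a0 assms(2) by simp
      ultimately have "real (nat i) \<le> \<lceil>\<bar>A\<bar> / a 0 + a 0 / B\<rceil>"
        by (smt (verit) le_of_int_ceiling)
      hence "nat i \<le> N" unfolding N_def by linarith
      thus ?thesis using True by simp
    next
      case False
      have p1: "2 ^ nat (- i) * a i \<le> a 0" using si_pow[OF assms(1), of i 0] False by simp
      have p2: "real (nat (-i)) < 2 ^ nat (-i)" by (rule of_nat_less_two_power) have "(2::real) ^ nat (-i) * B \<le> 2 ^ nat (-i) * a i" using h by simp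
      have p3: "(2::real) ^ nat (-i) * B \<le> 2 ^ nat (-i) * a i" using h by simp
      have p4: "real (nat (-i)) * B \<le> 2 ^ nat (-i) * B" using mult_right_mono[OF less_imp_le[OF p2], of B] assms(2) by linarith
      from p1 p3 p4 have "real (nat (-i)) * B \<le> a 0" by linarith
      hence "real (nat (-i)) \<le> a 0 / B" using assms(2) by (simp add: field_simps)
      moreover have "\<bar>A\<bar> / a 0 \<ge> 0" using a0 by simp
      ultimately have "real (nat (-i)) \<le> \<lceil>\<bar>A\<bar> / a 0 + a 0 / B\<rceil>"
        by (smt (verit) le_of_int_ceiling)
      hence "nat (-i) \<le> N" unfolding N_def by linarith
      thus ?thesis using False by simp
    qed
  qed
  thus ?thesis by (rule finite_subset) simp
qed


lemma geo_sum_bound: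
  fixes q :: real and n :: int
  assumes "finite S" "\<forall>j\<in>S. j \<le> n" "0 < q" "q < 1"
  shows "(\<Sum>j\<in>S. q ^ nat (n - j)) \<le> 1 / (1 - q)"
proof -
  have inj: "inj_on (\<lambda>j. nat (n - j)) S"
  proof (rule inj_onI)
    fix x y assume "x \<in> S" "y \<in> S" "nat (n - x) = nat (n - y)"
    thus "x = y" using assms(2) eq_nat_nat_iff[of "n - x" "n - y"] by simp
  qed
  have "(\<Sum>j\<in>S. q ^ nat (n - j)) = (\<Sum>d\<in>(\<lambda>j. nat (n - j)) ` S. q ^ d)"
    using sum.reindex[OF inj, of "\<lambda>d. q ^ d"] by simp
  also have "\<dots> \<le> (\<Sum>d. q ^ d)"
    by (rule sum_le_suminf) (use assms in auto)
  also have "\<dots> = 1 / (1 - q)" using assms by (intro suminf_geometric) simp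
  finally show ?thesis .
qed

lemma sum_fwd:
  fixes f :: "int \<Rightarrow> real" and b :: real
  assumes fin: "finite S" and ne: "S \<noteq> {}" and pos: "\<forall>i\<in>S. f i > 0" and b: "b > 1"
    and H: "\<forall>i\<in>S. \<forall>j\<in>S. i + 2 \<le> j \<longrightarrow> b ^ (nat (j - i) - 1) * f i \<le> f j"
  shows "sum f S \<le> b^3/(b-1) * Max (f ` S)"
proof -
  define n where "n = Max S"
  have nS: "n \<in> S" using fin ne by (simp add: n_def)
  have jn: "\<forall>j\<in>S. j \<le> n" using fin by (simp add: n_def)
  define M where "M = Max (f ` S)"
  have fM: "\<forall>j\<in>S. f j \<le> M" using fin M_def by simp
  have Mpos: "M > 0" using fM nS pos by force
  define q where "q = 1/b"
  have q: "0 < q" "q < 1" using b by (auto simp: q_def)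
  have bnd: "\<forall>j\<in>S. f j \<le> M * b^2 * q ^ nat (n - j)"
  proof
    fix j assume jS: "j \<in> S"
    show "f j \<le> M * b^2 * q ^ nat (n-j)"
    proof (cases "j + 2 \<le> n")
      case True
      define d where "d = nat (n - j)"
      have d2: "d \<ge> 2" using True by (simp add: d_def)
      have "b^(d - 1) * f j \<le> f n" using H jS nS True by (simp add: d_def)
      hence "b^(d-1) * f j \<le> M" using fM nS by (meson order_trans)
      hence "f j \<le> M / b^(d-1)" using b by (simp add: field_simps)
      also have "M / b^(d-1) = M * b * q^d"
      proof -
        have "b ^ d = b * b^(d-1)" using d2 by (metis Suc_diff_1 less_le_trans pos2 power_Suc)
        thus ?thesis using b by (simp add: q_def field_simps power_one_over)
      qed
      also have "\<dots> \<le> M * b^2 * q^d" using b Mpos q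
        by (intro mult_right_mono) (auto simp: power2_eq_square)
      finally show ?thesis by (simp add: d_def)
    next
      case False
      hence d1: "nat (n - j) \<le> 1" by simp
      have "q ^ 1 \<le> q ^ nat (n - j)" using q d1 by (intro power_decreasing) auto
      hence "b^2 * q \<le> b^2 * q ^ nat (n - j)" by (intro mult_left_mono) simp_all
      hence "M * b^2 * q \<le> M * b^2 * q ^ nat (n - j)" using Mpos by (simp add: mult.assoc)
      moreover have "M * b^2 * q = M * b" using b by (simp add: q_def power2_eq_square)
      moreover have "M \<le> M * b" using Mpos b by simp
      ultimately show ?thesis using fM jS by fastforce
    qed
  qed
  have "sum f S \<le> (\<Sum>j\<in>S. M * b^2 * q ^ nat (n - j))" by (rule sum_mono) (use bnd in auto)
  also have "\<dots> = M * b^2 * (\<Sum>j\<in>S. q ^ nat (n - j))" by (simp add: sum_distrib_left)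
  also have "\<dots> \<le> M * b^2 * (1 / (1 - q))"
    using geo_sum_bound[OF fin jn q] Mpos by (intro mult_left_mono) auto
  also have "\<dots> = b^3/(b-1) * M" using b by (simp add: q_def field_simps power2_eq_square power3_eq_cube)
  finally show ?thesis by (simp add: M_def)
qed

lemma sum_bwd:
  fixes f :: "int \<Rightarrow> real" and b :: real
  assumes fin: "finite S" and ne: "S \<noteq> {}" and pos: "\<forall>i\<in>S. f i > 0" and b: "b > 1"
    and H: "\<forall>i\<in>S. \<forall>j\<in>S. i + 2 \<le> j \<longrightarrow> b ^ (nat (j - i) - 1) * f j \<le> f i"
  shows "sum f S \<le> b^3/(b-1) * Max (f ` S)"
proof -
  let ?S = "uminus ` S" and ?f = "\<lambda>i. f (- i)"
  have "sum ?f ?S \<le> b^3/(b-1) * Max (?f ` ?S)"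
  proof (rule sum_fwd)
    show "finite ?S" using fin by simp
    show "?S \<noteq> {}" using ne by simp
    show "\<forall>i\<in>?S. ?f i > 0" using pos by auto
    show "b > 1" by fact
    show "\<forall>i\<in>?S. \<forall>j\<in>?S. i + 2 \<le> j \<longrightarrow> b ^ (nat (j - i) - 1) * ?f i \<le> ?f j"
    proof (intro ballI impI)
      fix i j assume "i \<in> ?S" "j \<in> ?S" "i + 2 \<le> j"
      then obtain i' j' where "i = - i'" "j = - j'" "i' \<in> S" "j' \<in> S" by auto
      with H \<open>i + 2 \<le> j\<close> show "b ^ (nat (j - i) - 1) * ?f i \<le> ?f j"
        by (auto simp: algebra_simps)
    qed
  qed
  moreover have "sum ?f ?S = sum f S"
    by (subst sum.reindex) (auto simp: inj_on_def)
  moreover have "?f ` ?S = f ` S" by (auto simp: image_image)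
  ultimately show ?thesis by simp
qed

lemma pow_step:
  fixes x y r :: real
  assumes "x > 0" "y > 0" "2 ^ n * x \<le> y"
  shows "r > 0 \<Longrightarrow> (2 powr \<bar>r\<bar>) ^ n * x powr r \<le> y powr r"
    and "r < 0 \<Longrightarrow> (2 powr \<bar>r\<bar>) ^ n * y powr r \<le> x powr r"
proof -
  have e: "(2 ^ n * x) powr r = (2 powr r) ^ n * x powr r"
    using assms by (simp add: powr_mult powr_realpow[symmetric] powr_powr
        flip: powr_realpow) (metis mult.commute powr_powr powr_realpow zero_less_numeral)
  show "r > 0 \<Longrightarrow> (2 powr \<bar>r\<bar>) ^ n * x powr r \<le> y powr r"
    using powr_mono2[of r "2 ^ n * x" y] assms e by simp
  assume r: "r < 0"
  have "y powr r \<le> (2 ^ n * x) powr r"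
    using assms r by (intro powr_mono2') auto
  hence "y powr r \<le> (2 powr r) ^ n * x powr r" using e by simp
  hence "(2 powr -r) ^ n * y powr r \<le> (2 powr -r) ^ n * ((2 powr r) ^ n * x powr r)"
    by (intro mult_left_mono) auto
  also have "\<dots> = x powr r"
    by (simp add: mult.assoc[symmetric] power_mult_distrib[symmetric] powr_add[symmetric])
  finally show "(2 powr \<bar>r\<bar>) ^ n * y powr r \<le> x powr r" using r by simp
qed


lemma cancel_aux:
  fixes a w u v c :: real
  assumes "a > 0" "v \<ge> 0" "2 * c * (a * u) \<le> w * v" "w \<le> 2 * a"
  shows "c * u \<le> v"
proof -
  have "w * v \<le> 2 * a * v" using assms(2,4) by (rule mult_right_mono[rotated])
  hence "(2 * a) * (c * u) \<le> (2 * a) * v" using assms(3) by (simp add: algebra_simps)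
  thus ?thesis using assms(1) by simp
qed

lemma dir_generic:
  fixes \<psi> \<rho> \<Phi> :: "real \<Rightarrow> real" and t \<sigma> :: "int \<Rightarrow> real"
  assumes inc: "strongly_increasing (\<lambda>i. \<psi> (t i))"
    and dec: "strongly_decreasing (\<lambda>i. \<psi> (t i) / t i)"
    and tpos: "\<forall>i. t i > 0"
    and decomp: "\<forall>x>0. \<psi> x = \<rho> x * \<Phi> x"
    and Phipos: "\<forall>x>0. \<Phi> x \<ge> 0"
    and nd: "nd_quasi_concave \<rho>"
    and ds: "discretizing_seq \<rho> \<sigma>"
    and S: "S = {i. \<sigma> k \<le> t i \<and> t i \<le> \<sigma> (k + 1)}"
  shows "(\<forall>i\<in>S. \<forall>j\<in>S. i + 2 \<le> j \<longrightarrow> 2 ^ (nat (j - i) - 1) * \<Phi> (t i) \<le> \<Phi> (t j))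
       \<or> (\<forall>i\<in>S. \<forall>j\<in>S. i + 2 \<le> j \<longrightarrow> 2 ^ (nat (j - i) - 1) * \<Phi> (t j) \<le> \<Phi> (t i))"
proof -
  obtain Z1 Z2 where Z: "Z1 \<union> Z2 = UNIV" "\<forall>k\<in>Z1. \<rho> (\<sigma> (k + 1)) \<le> 2 * \<rho> (\<sigma> k)"
      "\<forall>k\<in>Z2. \<rho> (\<sigma> k) / \<sigma> k \<le> 2 * (\<rho> (\<sigma> (k + 1)) / \<sigma> (k + 1))"
    using ds unfolding discretizing_seq_def by blast
  have spos: "\<forall>k. \<sigma> k > 0" using ds unfolding discretizing_seq_def strongly_increasing_def by blast
  have common: "2 * 2 ^ (nat (j - i) - 1) = (2::real) ^ nat (j - i)" if "i + 2 \<le> j" for i j :: int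
  proof -
    have "nat (j - i) = Suc (nat (j - i) - 1)" using that by simp
    hence "(2::real) ^ nat (j - i) = 2 ^ Suc (nat (j - i) - 1)" by metis
    thus ?thesis by simp
  qed
  have inS: "\<sigma> k \<le> t i" "t i \<le> \<sigma> (k + 1)" if "i \<in> S" for i using that S by auto
  show ?thesis
  proof (cases "k \<in> Z1")
    case True
    have "\<forall>i\<in>S. \<forall>j\<in>S. i + 2 \<le> j \<longrightarrow> 2 ^ (nat (j - i) - 1) * \<Phi> (t i) \<le> \<Phi> (t j)"
    proof (intro ballI impI)
      fix i j assume ij: "i \<in> S" "j \<in> S" "i + 2 \<le> j"
      have A: "2 ^ nat (j - i) * \<psi> (t i) \<le> \<psi> (t j)" using si_pow[OF inc, of i j] ij by simp
      have "\<rho> (t j) \<le> \<rho> (\<sigma> (k + 1))" using nd_props(2)[OF nd] inS[OF ij(2)] tpos by blast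
      also have "\<dots> \<le> 2 * \<rho> (\<sigma> k)" using Z(2) True by blast
      also have "\<rho> (\<sigma> k) \<le> \<rho> (t i)" using nd_props(2)[OF nd] inS[OF ij(1)] spos by blast
      finally have w: "\<rho> (t j) \<le> 2 * \<rho> (t i)" by simp
      show "2 ^ (nat (j - i) - 1) * \<Phi> (t i) \<le> \<Phi> (t j)"
      proof (rule cancel_aux[OF _ _ _ w])
        show "\<rho> (t i) > 0" using nd_props(1)[OF nd] tpos by blast
        show "\<Phi> (t j) \<ge> 0" using Phipos tpos by blast
        show "2 * 2 ^ (nat (j - i) - 1) * (\<rho> (t i) * \<Phi> (t i)) \<le> \<rho> (t j) * \<Phi> (t j)"
          using A common[OF ij(3)] decomp tpos by simp
      qed
    qed
    thus ?thesis by blast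
  next
    case False
    hence Z2: "k \<in> Z2" using Z(1) by blast
    have "\<forall>i\<in>S. \<forall>j\<in>S. i + 2 \<le> j \<longrightarrow> 2 ^ (nat (j - i) - 1) * \<Phi> (t j) \<le> \<Phi> (t i)"
    proof (intro ballI impI)
      fix i j assume ij: "i \<in> S" "j \<in> S" "i + 2 \<le> j"
      have B: "2 ^ nat (j - i) * (\<psi> (t j) / t j) \<le> \<psi> (t i) / t i" using sd_pow[OF dec, of i j] ij by simp
      have "\<rho> (t i) / t i \<le> \<rho> (\<sigma> k) / \<sigma> k" using nd_props(3)[OF nd] inS[OF ij(1)] spos by blast
      also have "\<dots> \<le> 2 * (\<rho> (\<sigma> (k + 1)) / \<sigma> (k + 1))" using Z(3) Z2 by blast
      also have "\<rho> (\<sigma> (k + 1)) / \<sigma> (k + 1) \<le> \<rho> (t j) / t j"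
        using nd_props(3)[OF nd] inS[OF ij(2)] tpos by blast
      finally have w: "\<rho> (t i) / t i \<le> 2 * (\<rho> (t j) / t j)" by simp
      show "2 ^ (nat (j - i) - 1) * \<Phi> (t j) \<le> \<Phi> (t i)"
      proof (rule cancel_aux[OF _ _ _ w])
        show "\<rho> (t j) / t j > 0" using nd_props(1)[OF nd] tpos by simp
        show "\<Phi> (t i) \<ge> 0" using Phipos tpos by blast
        have e1: "\<psi> (t j) = \<rho> (t j) * \<Phi> (t j)" using decomp tpos by blast
        have e2: "\<psi> (t i) = \<rho> (t i) * \<Phi> (t i)" using decomp tpos by blast
        have q1: "\<psi> (t j) / t j = \<rho> (t j) / t j * \<Phi> (t j)" using e1 by simp
        have q2: "\<psi> (t i) / t i = \<rho> (t i) / t i * \<Phi> (t i)" using e2 by simp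
        have B': "2 ^ nat (j - i) * (\<rho> (t j) / t j * \<Phi> (t j)) \<le> \<rho> (t i) / t i * \<Phi> (t i)"
          using B unfolding q1 q2 .
        thus "2 * 2 ^ (nat (j - i) - 1) * (\<rho> (t j) / t j * \<Phi> (t j)) \<le> \<rho> (t i) / t i * \<Phi> (t i)"
          by (simp only: common[OF ij(3)])
      qed
    qed
    thus ?thesis by blast
  qed
qed

lemma sum_le_max_pow:
  fixes g :: "int \<Rightarrow> real" and r :: real
  assumes fin: "finite S" and ne: "S \<noteq> {}" and gpos: "\<forall>i\<in>S. g i > 0" and r: "r \<noteq> 0"
    and D: "(\<forall>i\<in>S. \<forall>j\<in>S. i + 2 \<le> j \<longrightarrow> 2 ^ (nat (j - i) - 1) * g i \<le> g j)
       \<or> (\<forall>i\<in>S. \<forall>j\<in>S. i + 2 \<le> j \<longrightarrow> 2 ^ (nat (j - i) - 1) * g j \<le> g i)"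
  shows "(\<Sum>i\<in>S. g i powr r) \<le> (2 powr \<bar>r\<bar>) ^ 3 / (2 powr \<bar>r\<bar> - 1) * Max ((\<lambda>i. g i powr r) ` S)"
proof -
  let ?b = "2 powr \<bar>r\<bar>" and ?f = "\<lambda>i. g i powr r"
  have b: "?b > 1" using powr_less_mono[of 0 "\<bar>r\<bar>" 2] r by simp
  have fpos: "\<forall>i\<in>S. ?f i > 0" using gpos by auto
  have F: "\<forall>i\<in>S. \<forall>j\<in>S. i + 2 \<le> j \<longrightarrow> ?b ^ (nat (j - i) - 1) * ?f i \<le> ?f j"
    if "r > 0" "\<forall>i\<in>S. \<forall>j\<in>S. i + 2 \<le> j \<longrightarrow> 2 ^ (nat (j - i) - 1) * g i \<le> g j"
    using that gpos pow_step(1) by blast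
  have F2: "\<forall>i\<in>S. \<forall>j\<in>S. i + 2 \<le> j \<longrightarrow> ?b ^ (nat (j - i) - 1) * ?f j \<le> ?f i"
    if "r > 0" "\<forall>i\<in>S. \<forall>j\<in>S. i + 2 \<le> j \<longrightarrow> 2 ^ (nat (j - i) - 1) * g j \<le> g i"
    using that gpos pow_step(1) by blast
  have B1: "\<forall>i\<in>S. \<forall>j\<in>S. i + 2 \<le> j \<longrightarrow> ?b ^ (nat (j - i) - 1) * ?f j \<le> ?f i"
    if "r < 0" "\<forall>i\<in>S. \<forall>j\<in>S. i + 2 \<le> j \<longrightarrow> 2 ^ (nat (j - i) - 1) * g i \<le> g j"
    using that gpos pow_step(2) by blast
  have B2: "\<forall>i\<in>S. \<forall>j\<in>S. i + 2 \<le> j \<longrightarrow> ?b ^ (nat (j - i) - 1) * ?f i \<le> ?f j"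
    if "r < 0" "\<forall>i\<in>S. \<forall>j\<in>S. i + 2 \<le> j \<longrightarrow> 2 ^ (nat (j - i) - 1) * g j \<le> g i"
    using that gpos pow_step(2) by blast
  have "r > 0 \<or> r < 0" using r by linarith
  thus ?thesis
    using D F F2 B1 B2 sum_fwd[OF fin ne fpos b] sum_bwd[OF fin ne fpos b] by blast
qed

lemma conv_Q1:
  fixes G :: "int \<Rightarrow> real"
  assumes nd: "nd_quasi_concave p" and Gpos: "\<forall>i. G i > 0"
    and D: "(\<forall>i\<in>S. \<forall>j\<in>S. i + 2 \<le> j \<longrightarrow> 2 ^ (nat (j - i) - 1) * p (G i) \<le> p (G j))
       \<or> (\<forall>i\<in>S. \<forall>j\<in>S. i + 2 \<le> j \<longrightarrow> 2 ^ (nat (j - i) - 1) * p (G j) \<le> p (G i))"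
  shows "(\<forall>i\<in>S. \<forall>j\<in>S. i + 2 \<le> j \<longrightarrow> 2 ^ (nat (j - i) - 1) * G i \<le> G j)
       \<or> (\<forall>i\<in>S. \<forall>j\<in>S. i + 2 \<le> j \<longrightarrow> 2 ^ (nat (j - i) - 1) * G j \<le> G i)"
proof -
  have c1: "(1::real) < 2 ^ (nat (j - i) - 1)" if "i + 2 \<le> j" for i j :: int
    using that by (intro one_less_power) auto
  show ?thesis using D
  proof
    assume L: "\<forall>i\<in>S. \<forall>j\<in>S. i + 2 \<le> j \<longrightarrow> 2 ^ (nat (j - i) - 1) * p (G i) \<le> p (G j)"
    have "\<forall>i\<in>S. \<forall>j\<in>S. i + 2 \<le> j \<longrightarrow> 2 ^ (nat (j - i) - 1) * G i \<le> G j"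
      using qc_Q1[OF nd] Gpos c1 L by blast
    thus ?thesis by blast
  next
    assume L: "\<forall>i\<in>S. \<forall>j\<in>S. i + 2 \<le> j \<longrightarrow> 2 ^ (nat (j - i) - 1) * p (G j) \<le> p (G i)"
    have "\<forall>i\<in>S. \<forall>j\<in>S. i + 2 \<le> j \<longrightarrow> 2 ^ (nat (j - i) - 1) * G j \<le> G i"
      using qc_Q1[OF nd] Gpos c1 L by blast
    thus ?thesis by blast
  qed
qed

lemma conv_Q2:
  fixes G :: "int \<Rightarrow> real"
  assumes nd: "nd_quasi_concave p" and Gpos: "\<forall>i. G i > 0"
    and D: "(\<forall>i\<in>S. \<forall>j\<in>S. i + 2 \<le> j \<longrightarrow> 2 ^ (nat (j - i) - 1) * (p (G i) / G i) \<le> p (G j) / G j)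
       \<or> (\<forall>i\<in>S. \<forall>j\<in>S. i + 2 \<le> j \<longrightarrow> 2 ^ (nat (j - i) - 1) * (p (G j) / G j) \<le> p (G i) / G i)"
  shows "(\<forall>i\<in>S. \<forall>j\<in>S. i + 2 \<le> j \<longrightarrow> 2 ^ (nat (j - i) - 1) * G i \<le> G j)
       \<or> (\<forall>i\<in>S. \<forall>j\<in>S. i + 2 \<le> j \<longrightarrow> 2 ^ (nat (j - i) - 1) * G j \<le> G i)"
proof -
  have c1: "(1::real) < 2 ^ (nat (j - i) - 1)" if "i + 2 \<le> j" for i j :: int
    using that by (intro one_less_power) auto
  show ?thesis using D
  proof
    assume L: "\<forall>i\<in>S. \<forall>j\<in>S. i + 2 \<le> j \<longrightarrow> 2 ^ (nat (j - i) - 1) * (p (G i) / G i) \<le> p (G j) / G j"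
    have "\<forall>i\<in>S. \<forall>j\<in>S. i + 2 \<le> j \<longrightarrow> 2 ^ (nat (j - i) - 1) * G j \<le> G i"
      using qc_Q2[OF nd] Gpos c1 L by blast
    thus ?thesis by blast
  next
    assume L: "\<forall>i\<in>S. \<forall>j\<in>S. i + 2 \<le> j \<longrightarrow> 2 ^ (nat (j - i) - 1) * (p (G j) / G j) \<le> p (G i) / G i"
    have "\<forall>i\<in>S. \<forall>j\<in>S. i + 2 \<le> j \<longrightarrow> 2 ^ (nat (j - i) - 1) * G i \<le> G j"
      using qc_Q2[OF nd] Gpos c1 L by blast
    thus ?thesis by blast
  qed
qed

lemma block_bound:
  fixes r :: real and G :: "int \<Rightarrow> real"
  assumes r: "r \<noteq> 0" and fin: "finite S" and Gpos: "\<forall>i. G i > 0"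
    and D: "(\<forall>i\<in>S. \<forall>j\<in>S. i + 2 \<le> j \<longrightarrow> 2 ^ (nat (j - i) - 1) * G i \<le> G j)
       \<or> (\<forall>i\<in>S. \<forall>j\<in>S. i + 2 \<le> j \<longrightarrow> 2 ^ (nat (j - i) - 1) * G j \<le> G i)"
  shows "(\<Sum>i\<in>S. G i powr r) \<le> (2 powr \<bar>r\<bar>) ^ 3 / (2 powr \<bar>r\<bar> - 1)
            * (if S = {} then 0 else Max ((\<lambda>i. G i powr r) ` S))"
proof (cases "S = {}")
  case True then show ?thesis by simp
next
  case False
  then show ?thesis using sum_le_max_pow[OF fin False _ r D] Gpos by simp
qed

theorem lemma3p7:
  fixes r :: real and \<phi>0 \<phi>1 \<phi> :: "real \<Rightarrow> real" and t \<tau> z :: "int \<Rightarrow> real"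
  assumes "r \<noteq> 0"
    and "nd_quasi_concave \<phi>0" and "nd_quasi_concave \<phi>1" and "nd_quasi_concave \<phi>"
    and "discretizing_seq (compose_qc \<phi> \<phi>0 \<phi>1) t"
    and "discretizing_seq \<phi>0 \<tau>"
    and "discretizing_seq \<phi>1 z"
  shows "\<exists>C. \<forall>k::int.
    (let S = {i. \<tau> k \<le> t i \<and> t i \<le> \<tau> (k + 1)};
         f = (\<lambda>i. (\<phi>1 (t i) / \<phi>0 (t i)) powr r)
     in (\<Sum>i\<in>S. f i) \<le> C * (if S = {} then 0 else Max (f ` S))) \<and>
    (let S = {i. z k \<le> t i \<and> t i \<le> z (k + 1)};
         f = (\<lambda>i. (\<phi>1 (t i) / \<phi>0 (t i)) powr r)
     in (\<Sum>i\<in>S. f i) \<le> C * (if S = {} then 0 else Max (f ` S)))"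
proof -
  note r = assms(1) and nd0 = assms(2) and nd1 = assms(3) and nd = assms(4)
    and dt = assms(5) and dtau = assms(6) and dz = assms(7)
  define \<psi> where "\<psi> = compose_qc \<phi> \<phi>0 \<phi>1"
  define G where "G = (\<lambda>i. \<phi>1 (t i) / \<phi>0 (t i))"
  have inc: "strongly_increasing (\<lambda>i. \<psi> (t i))"
    and dec: "strongly_decreasing (\<lambda>i. \<psi> (t i) / t i)"
    and tinc: "strongly_increasing t"
    using dt unfolding discretizing_seq_def \<psi>_def by auto
  have tpos: "\<forall>i. t i > 0" using tinc unfolding strongly_increasing_def by blast
  have p0: "\<forall>x>0. \<phi>0 x > 0" using nd_props(1)[OF nd0] by blast
  have p1: "\<forall>x>0. \<phi>1 x > 0" using nd_props(1)[OF nd1] by blast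
  have pp: "\<forall>x>0. \<phi> x > 0" using nd_props(1)[OF nd] by blast
  have Gpos: "\<forall>i. G i > 0" using tpos p0 p1 by (simp add: G_def)
  define C where "C = (2 powr \<bar>r\<bar>) ^ 3 / (2 powr \<bar>r\<bar> - 1)"
  have "\<forall>k::int.
    (let S = {i. \<tau> k \<le> t i \<and> t i \<le> \<tau> (k + 1)};
         f = (\<lambda>i. (\<phi>1 (t i) / \<phi>0 (t i)) powr r)
     in (\<Sum>i\<in>S. f i) \<le> C * (if S = {} then 0 else Max (f ` S))) \<and>
    (let S = {i. z k \<le> t i \<and> t i \<le> z (k + 1)};
         f = (\<lambda>i. (\<phi>1 (t i) / \<phi>0 (t i)) powr r)
     in (\<Sum>i\<in>S. f i) \<le> C * (if S = {} then 0 else Max (f ` S)))"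
  proof
    fix k :: int
    define S1 where "S1 = {i. \<tau> k \<le> t i \<and> t i \<le> \<tau> (k + 1)}"
    define S2 where "S2 = {i. z k \<le> t i \<and> t i \<le> z (k + 1)}"
    have taupos: "\<tau> k > 0" using dtau unfolding discretizing_seq_def strongly_increasing_def by blast
    have zpos: "z k > 0" using dz unfolding discretizing_seq_def strongly_increasing_def by blast
    have fin1: "finite S1" unfolding S1_def using si_finite[OF tinc taupos] .
    have fin2: "finite S2" unfolding S2_def using si_finite[OF tinc zpos] .
    have D1: "(\<forall>i\<in>S1. \<forall>j\<in>S1. i + 2 \<le> j \<longrightarrow> 2 ^ (nat (j - i) - 1) * \<phi> (G i) \<le> \<phi> (G j))
       \<or> (\<forall>i\<in>S1. \<forall>j\<in>S1. i + 2 \<le> j \<longrightarrow> 2 ^ (nat (j - i) - 1) * \<phi> (G j) \<le> \<phi> (G i))"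
    proof -
      have "(\<forall>i\<in>S1. \<forall>j\<in>S1. i + 2 \<le> j \<longrightarrow> 2 ^ (nat (j - i) - 1) * (\<lambda>x. \<phi> (\<phi>1 x / \<phi>0 x)) (t i) \<le> (\<lambda>x. \<phi> (\<phi>1 x / \<phi>0 x)) (t j))
       \<or> (\<forall>i\<in>S1. \<forall>j\<in>S1. i + 2 \<le> j \<longrightarrow> 2 ^ (nat (j - i) - 1) * (\<lambda>x. \<phi> (\<phi>1 x / \<phi>0 x)) (t j) \<le> (\<lambda>x. \<phi> (\<phi>1 x / \<phi>0 x)) (t i))"
      proof (rule dir_generic[OF inc dec tpos _ _ nd0 dtau S1_def])
        show "\<forall>x>0. \<psi> x = \<phi>0 x * \<phi> (\<phi>1 x / \<phi>0 x)" by (simp add: \<psi>_def compose_qc_def)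
        show "\<forall>x>0. (\<phi> (\<phi>1 x / \<phi>0 x)) \<ge> 0" using pp p0 p1 by (simp add: less_imp_le)
      qed
      thus ?thesis by (simp add: G_def)
    qed
    have D2: "(\<forall>i\<in>S2. \<forall>j\<in>S2. i + 2 \<le> j \<longrightarrow> 2 ^ (nat (j - i) - 1) * (\<phi> (G i) / G i) \<le> \<phi> (G j) / G j)
       \<or> (\<forall>i\<in>S2. \<forall>j\<in>S2. i + 2 \<le> j \<longrightarrow> 2 ^ (nat (j - i) - 1) * (\<phi> (G j) / G j) \<le> \<phi> (G i) / G i)"
    proof -
      have "(\<forall>i\<in>S2. \<forall>j\<in>S2. i + 2 \<le> j \<longrightarrow> 2 ^ (nat (j - i) - 1) * (\<lambda>x. \<phi> (\<phi>1 x / \<phi>0 x) / (\<phi>1 x / \<phi>0 x)) (t i) \<le> (\<lambda>x. \<phi> (\<phi>1 x / \<phi>0 x) / (\<phi>1 x / \<phi>0 x)) (t j))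
       \<or> (\<forall>i\<in>S2. \<forall>j\<in>S2. i + 2 \<le> j \<longrightarrow> 2 ^ (nat (j - i) - 1) * (\<lambda>x. \<phi> (\<phi>1 x / \<phi>0 x) / (\<phi>1 x / \<phi>0 x)) (t j) \<le> (\<lambda>x. \<phi> (\<phi>1 x / \<phi>0 x) / (\<phi>1 x / \<phi>0 x)) (t i))"
      proof (rule dir_generic[OF inc dec tpos _ _ nd1 dz S2_def])
        show "\<forall>x>0. \<psi> x = \<phi>1 x * (\<phi> (\<phi>1 x / \<phi>0 x) / (\<phi>1 x / \<phi>0 x))"
        proof (intro allI impI)
          fix x :: real assume "x > 0"
          hence "\<phi>0 x > 0" "\<phi>1 x > 0" using p0 p1 by auto
          thus "\<psi> x = \<phi>1 x * (\<phi> (\<phi>1 x / \<phi>0 x) / (\<phi>1 x / \<phi>0 x))"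
            by (simp add: \<psi>_def compose_qc_def field_simps)
        qed
        show "\<forall>x>0. \<phi> (\<phi>1 x / \<phi>0 x) / (\<phi>1 x / \<phi>0 x) \<ge> 0" using pp p0 p1 by (simp add: less_imp_le)
      qed
      thus ?thesis by (simp add: G_def)
    qed
    have E1: "(\<Sum>i\<in>S1. G i powr r) \<le> C * (if S1 = {} then 0 else Max ((\<lambda>i. G i powr r) ` S1))"
      unfolding C_def by (rule block_bound[OF r fin1 Gpos conv_Q1[OF nd Gpos D1]])
    have E2: "(\<Sum>i\<in>S2. G i powr r) \<le> C * (if S2 = {} then 0 else Max ((\<lambda>i. G i powr r) ` S2))"
      unfolding C_def by (rule block_bound[OF r fin2 Gpos conv_Q2[OF nd Gpos D2]])
    show "(let S = {i. \<tau> k \<le> t i \<and> t i \<le> \<tau> (k + 1)};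
         f = (\<lambda>i. (\<phi>1 (t i) / \<phi>0 (t i)) powr r)
     in (\<Sum>i\<in>S. f i) \<le> C * (if S = {} then 0 else Max (f ` S))) \<and>
    (let S = {i. z k \<le> t i \<and> t i \<le> z (k + 1)};
         f = (\<lambda>i. (\<phi>1 (t i) / \<phi>0 (t i)) powr r)
     in (\<Sum>i\<in>S. f i) \<le> C * (if S = {} then 0 else Max (f ` S)))"
      using E1 E2 unfolding Let_def S1_def S2_def G_def by simp
  qed
  thus ?thesis by blast
qed

end
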